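(* Let $w\ge 1$ and $n\ge 1$ be integers and let $C\le \mathbb{F}_2^n$ be a linear subspace spanned by vectors of Hamming weight at most $w$, such that $\bigcup_{\boldsymbol{c}\in C}\operatorname{supp}(\boldsymbol{c})=[n]$. Then for every $0\le\lambda\le 1$, \[ Q_C(\lambda)\le\left(\frac{(1+\lambda)^w}{1+\lambda^w}\right)^{n/w}. \] Moreover, if $w=3$ then $Q_C(\lambda)\le (1+3\lambda)^{n/3}$ for every $0\le\lambda\le1$, and if $w=4$ then $Q_C(\lambda)\le (1+4\lambda+6\lambda^2)^{n/4}$ for every $0\le\lambda\le 1$.
   Context: For a finite set $U$ and a linear subspace $C\le\mathbb{F}_2^U$, the weight $w_{\mathrm H}(A)$ of a coset $A\in\mathbb{F}_2^U/C$ is the minimum Hamming weight of a vector in $A$. The coset-weight generating function of $C$ is $Q_C(\lambda)=\sum_{A\in\mathbb{F}_2^U/C}\lambda^{w_{\mathrm H}(A)}$ (with the convention $0^0=1$). For $\boldsymbol{c}\in\mathbb{F}_2^n$, $\operatorname{supp}(\boldsymbol{c})=\{i\in[n]:c_i=1\}$, and $[n]=\{1,\dots,n\}$. *)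

theory Defs
  imports "HOL-Analysis.Analysis" "HOL-Library.Z2"
begin

text \<open>Vectors of F_2^n are modelled as elements of bit ^ 'n for a finite index
type 'n with CARD('n) = n; the index set [n] is UNIV :: 'n set.\<close>

definition supp :: "bit ^ 'n \<Rightarrow> 'n set" where
  "supp x = {i. x $ i \<noteq> 0}"

definition hweight :: "bit ^ 'n::finite \<Rightarrow> nat" where
  "hweight x = card (supp x)"

definition F2span :: "(bit ^ 'n) set \<Rightarrow> (bit ^ 'n) set" where
  "F2span G = module.span (*s) G"

definition cosets :: "(bit ^ 'n) set \<Rightarrow> (bit ^ 'n) set set" where
  "cosets C = {(\<lambda>c. x + c) ` C | x. True}"

definition coset_weight :: "(bit ^ 'n::finite) set \<Rightarrow> nat" where
  "coset_weight A = Min (hweight ` A)"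

definition Q :: "(bit ^ 'n::finite) set \<Rightarrow> real \<Rightarrow> real" where
  "Q C lam = (\<Sum>A\<in>cosets C. lam ^ coset_weight A)"

end

theory Submission
  imports Defs
begin


instance bit :: finite
proof
  have "(UNIV::bit set) = {0, 1}" by (auto intro: bit.exhaust)
  then show "finite (UNIV::bit set)" by (metis finite.emptyI finite.insertI)
qed

lemma bit_add_self[simp]: "(a::bit) + a = 0" by (cases a) simp_all

lemma vadd_self[simp]: "(x::bit^'n) + x = 0"
  by (simp add: vec_eq_iff)

lemma vtwo[simp]: "(2::bit^'n) = 0"
  by (simp add: vec_eq_iff)

lemma vminus_eq[simp]: "(x::bit^'n) - y = x + y"
  by (simp add: vec_eq_iff)

lemma vadd_cancel[simp]: "(x::bit^'n) + (x + y) = y"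
  by (simp add: add.assoc[symmetric])

lemma supp_add: "supp ((x::bit^'n) + y) \<subseteq> supp x \<union> supp y"
  by (auto simp: supp_def)

lemma hweight_add: "hweight ((x::bit^'n::finite) + y) \<le> hweight x + hweight y"
proof -
  have "card (supp (x+y)) \<le> card (supp x \<union> supp y)"
    by (rule card_mono) (auto simp: supp_add)
  also have "\<dots> \<le> card (supp x) + card (supp y)" by (rule card_Un_le)
  finally show ?thesis by (simp add: hweight_def)
qed

lemma supp_add_disj: "supp (x::bit^'n) \<inter> supp y = {} \<Longrightarrow> supp (x + y) = supp x \<union> supp y"
  by (auto simp: supp_def)

lemma hweight_add_disj: "supp (x::bit^'n::finite) \<inter> supp y = {} \<Longrightarrow> hweight (x + y) = hweight x + hweight y"
  by (simp add: hweight_def supp_add_disj card_Un_disjoint)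

lemma hweight_zero[simp]: "hweight (0::bit^'n::finite) = 0"
  by (simp add: hweight_def supp_def)

lemma supp_zero[simp]: "supp (0::bit^'n) = {}"
  by (simp add: supp_def)

lemma span_insert_eq:
  "F2span (insert g F) = F2span F \<union> (\<lambda>c. g + c) ` F2span F"
proof -
  have "x \<in> F2span (insert g F) \<longleftrightarrow> x \<in> F2span F \<or> x + g \<in> F2span F" for x
  proof -
    have "x \<in> F2span (insert g F) \<longleftrightarrow> (\<exists>k. x - k *s g \<in> F2span F)"
      unfolding F2span_def by (rule vec.span_breakdown_eq)
    also have "\<dots> \<longleftrightarrow> x \<in> F2span F \<or> x + g \<in> F2span F"
    proof
      assume "\<exists>k. x - k *s g \<in> F2span F"
      then obtain k where "x - k *s g \<in> F2span F" by blast
      then show "x \<in> F2span F \<or> x + g \<in> F2span F"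
        by (cases k) simp_all
    next
      assume "x \<in> F2span F \<or> x + g \<in> F2span F"
      then show "\<exists>k. x - k *s g \<in> F2span F"
        by (metis scalar_mult_eq_scaleR vminus_eq vector_smult_lzero vector_smult_lid add_0_right)
    qed
    finally show ?thesis .
  qed
  moreover have "x + g \<in> F2span F \<longleftrightarrow> x \<in> (\<lambda>c. g + c) ` F2span F" for x
  proof
    assume "x + g \<in> F2span F"
    moreover have "x = g + (x + g)" by (simp add: add.commute)
    ultimately show "x \<in> (\<lambda>c. g + c) ` F2span F" by blast
  next
    assume "x \<in> (\<lambda>c. g + c) ` F2span F"
    then obtain c where "c \<in> F2span F" "x = g + c" by blast
    then show "x + g \<in> F2span F" by (simp add: add.commute)
  qed
  ultimately show ?thesis by blast
qed

lemma span_zero': "0 \<in> F2span G" unfolding F2span_def by (rule vec.span_zero)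
lemma span_add': "x \<in> F2span G \<Longrightarrow> y \<in> F2span G \<Longrightarrow> x + y \<in> F2span G"
  unfolding F2span_def by (rule vec.span_add)
lemma span_base': "x \<in> G \<Longrightarrow> x \<in> F2span G"
  unfolding F2span_def by (rule vec.span_base)



definition grp :: "(bit^'n) set \<Rightarrow> bool" where
  "grp C \<longleftrightarrow> 0 \<in> C \<and> (\<forall>x\<in>C. \<forall>y\<in>C. x + y \<in> C)"

lemma grp_span: "grp (F2span G)"
  by (simp add: grp_def span_zero' span_add')

definition omega :: "(bit^'n::finite) set \<Rightarrow> bit^'n \<Rightarrow> nat" where
  "omega C y = coset_weight ((\<lambda>c. y + c) ` C)"

lemma om_le: "c \<in> C \<Longrightarrow> omega C y \<le> hweight (y + c)"
  unfolding omega_def coset_weight_def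
  by (rule Min_le) auto

lemma om_ex: "0 \<in> C \<Longrightarrow> \<exists>c\<in>C. omega C y = hweight (y + c)"
proof -
  assume "0 \<in> C"
  then have "hweight ` (\<lambda>c. y + c) ` C \<noteq> {}" by auto
  then have "Min (hweight ` (\<lambda>c. y + c) ` C) \<in> hweight ` (\<lambda>c. y + c) ` C"
    by (intro Min_in) auto
  then show ?thesis unfolding omega_def coset_weight_def by auto
qed

lemma coset_shift: "grp C \<Longrightarrow> c \<in> C \<Longrightarrow> (\<lambda>c'. (y + c) + c') ` C = (\<lambda>c'. y + c') ` C"
proof (intro equalityI subsetI)
  fix x assume g: "grp C" and c: "c \<in> C"
  { assume "x \<in> (\<lambda>c'. (y + c) + c') ` C"
    then obtain c' where "c' \<in> C" "x = y + c + c'" by blast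
    then show "x \<in> (\<lambda>c'. y + c') ` C" using g c unfolding grp_def
      by (auto simp: add.assoc intro!: image_eqI[of _ _ "c + c'"]) }
  { assume "x \<in> (\<lambda>c'. y + c') ` C"
    then obtain c' where "c' \<in> C" "x = y + c'" by blast
    then show "x \<in> (\<lambda>c'. (y + c) + c') ` C" using g c unfolding grp_def
      by (auto simp: add.assoc intro!: image_eqI[of _ _ "c + c'"]) }
qed

lemma om_shift: "grp C \<Longrightarrow> c \<in> C \<Longrightarrow> omega C (y + c) = omega C y"
  unfolding omega_def by (simp add: coset_shift)

lemma om_add_le: "grp C \<Longrightarrow> omega C (y + h) \<le> omega C y + hweight h"
proof -
  assume g: "grp C"
  then obtain c where c: "c \<in> C" "omega C y = hweight (y + c)" using om_ex grp_def by blast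
  have "omega C (y + h) \<le> hweight (y + h + c)" by (rule om_le[OF c(1)])
  also have "y + h + c = (y + c) + h" by (simp add: algebra_simps)
  also have "hweight \<dots> \<le> hweight (y + c) + hweight h" by (rule hweight_add)
  finally show ?thesis using c by simp
qed

lemma card_coset: "card ((\<lambda>c. y + c) ` C) = card (C::(bit^'n) set)"
  by (rule card_image) (auto simp: inj_on_def)

lemma Q_sum:
  fixes C :: "(bit^'n::finite) set"
  assumes g: "grp C"
  shows "real (card C) * Q C lam = (\<Sum>y\<in>UNIV. lam ^ omega C y)"
proof -
  let ?cs = "\<lambda>y. (\<lambda>c. y + c) ` C"
  have cos: "cosets C = ?cs ` UNIV" unfolding cosets_def by auto
  have "(\<Sum>y\<in>UNIV. lam ^ omega C y) = (\<Sum>A\<in>?cs ` UNIV. \<Sum>y\<in>{x\<in>UNIV. ?cs x = A}. lam ^ omega C y)"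
    by (rule sum.image_gen) simp
  also have "\<dots> = (\<Sum>A\<in>?cs ` UNIV. real (card C) * lam ^ coset_weight A)"
  proof (rule sum.cong[OF refl])
    fix A assume "A \<in> ?cs ` UNIV"
    then obtain y0 where A: "A = ?cs y0" by blast
    have fib: "{x\<in>UNIV. ?cs x = A} = A"
    proof (intro equalityI subsetI)
      fix x assume "x \<in> {x\<in>UNIV. ?cs x = A}"
      then have "?cs x = A" by simp
      moreover have "x \<in> ?cs x" using g unfolding grp_def by (auto intro!: image_eqI[of _ _ 0])
      ultimately show "x \<in> A" by simp
    next
      fix x assume "x \<in> A"
      then obtain c where c: "c \<in> C" "x = y0 + c" using A by blast
      then show "x \<in> {x\<in>UNIV. ?cs x = A}" using coset_shift[OF g c(1), of y0] A by simp
    qed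
    have "(\<Sum>y\<in>A. lam ^ omega C y) = (\<Sum>y\<in>A. lam ^ coset_weight A)"
    proof (rule sum.cong[OF refl])
      fix y assume "y \<in> A"
      then have "y \<in> {x\<in>UNIV. ?cs x = A}" using fib by simp
      then show "lam ^ omega C y = lam ^ coset_weight A" unfolding omega_def by simp
    qed
    also have "\<dots> = real (card C) * lam ^ coset_weight A"
    proof -
      have "card A = card C" using A card_coset by metis
      then show ?thesis by simp
    qed
    finally show "(\<Sum>y\<in>{x\<in>UNIV. ?cs x = A}. lam ^ omega C y) = real (card C) * lam ^ coset_weight A"
      using fib by simp
  qed
  also have "\<dots> = real (card C) * Q C lam"
    unfolding Q_def cos by (simp add: sum_distrib_left)
  finally show ?thesis by simp
qed

lemma pow_anti: "0 \<le> (lam::real) \<Longrightarrow> lam \<le> 1 \<Longrightarrow> a \<le> b \<Longrightarrow> lam ^ b \<le> lam ^ a"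
  by (rule power_decreasing)

lemma sum_shift: "(\<Sum>y\<in>UNIV. f (y + c)) = (\<Sum>y\<in>UNIV. f y)" for c :: "bit^'n::finite"
  by (rule sum.reindex_bij_witness[of _ "\<lambda>y. y + c" "\<lambda>y. y + c"]) (auto simp: add.assoc)

lemma QW:
  fixes C :: "(bit^'n::finite) set"
  assumes g: "grp C" and l0: "0 \<le> lam" and l1: "lam \<le> (1::real)"
  shows "(\<Sum>y\<in>UNIV. lam ^ omega C y) * (\<Sum>c\<in>C. lam ^ hweight c)
         \<le> real (card C) * (\<Sum>y\<in>(UNIV::(bit^'n) set). lam ^ hweight y)"
proof -
  have "(\<Sum>y\<in>UNIV. lam ^ omega C y) * (\<Sum>c\<in>C. lam ^ hweight c)
      = (\<Sum>y\<in>UNIV. \<Sum>c\<in>C. lam ^ omega C y * lam ^ hweight c)"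
    by (rule sum_product)
  also have "\<dots> \<le> (\<Sum>y\<in>UNIV. \<Sum>c\<in>C. lam ^ hweight (y + c))"
  proof (rule sum_mono)
    fix y
    obtain c0 where c0: "c0 \<in> C" "omega C y = hweight (y + c0)" using om_ex g grp_def by blast
    have "(\<Sum>c\<in>C. lam ^ omega C y * lam ^ hweight c) \<le> (\<Sum>c\<in>C. lam ^ hweight (y + (c0 + c)))"
    proof (rule sum_mono)
      fix c assume "c \<in> C"
      have "hweight (y + (c0 + c)) \<le> hweight (y + c0) + hweight c"
        using hweight_add[of "y + c0" c] by (simp add: add.assoc)
      then have "lam ^ (hweight (y + c0) + hweight c) \<le> lam ^ hweight (y + (c0 + c))"
        by (rule pow_anti[OF l0 l1])
      then show "lam ^ omega C y * lam ^ hweight c \<le> lam ^ hweight (y + (c0 + c))"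
        using c0 by (simp add: power_add)
    qed
    also have "\<dots> = (\<Sum>c\<in>C. lam ^ hweight (y + c))"
    proof -
      have "(\<lambda>c. c0 + c) ` C = C"
        using coset_shift[OF g c0(1), of 0] by simp
      moreover have "inj_on (\<lambda>c. c0 + c) C" by (auto simp: inj_on_def)
      ultimately show ?thesis
        using sum.reindex[of "\<lambda>c. c0 + c" C "\<lambda>c. lam ^ hweight (y + c)"] by simp
    qed
    finally show "(\<Sum>c\<in>C. lam ^ omega C y * lam ^ hweight c) \<le> (\<Sum>c\<in>C. lam ^ hweight (y + c))" .
  qed
  also have "\<dots> = (\<Sum>c\<in>C. \<Sum>y\<in>UNIV. lam ^ hweight (y + c))"
    by (rule sum.swap)
  also have "\<dots> = (\<Sum>c\<in>C. \<Sum>y\<in>(UNIV::(bit^'n) set). lam ^ hweight y)"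
  proof (rule sum.cong[OF refl])
    fix c :: "bit^'n" assume "c \<in> C"
    show "(\<Sum>y\<in>UNIV. lam ^ hweight (y + c)) = (\<Sum>y\<in>(UNIV::(bit^'n) set). lam ^ hweight y)"
      by (rule sum_shift)
  qed
  also have "\<dots> = real (card C) * (\<Sum>y\<in>(UNIV::(bit^'n) set). lam ^ hweight y)" by simp
  finally show ?thesis .
qed



definition VP :: "'n set \<Rightarrow> (bit^'n) set" where
  "VP P = {v. \<forall>i. i \<notin> P \<longrightarrow> v $ i = 0}"

definition ind :: "'n set \<Rightarrow> bit^'n" where
  "ind S = (\<chi> i. if i \<in> S then 1 else 0)"

lemma supp_ind[simp]: "supp (ind S) = S"
  by (auto simp: supp_def ind_def)

lemma sum_Pow_card:
  assumes "finite P"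
  shows "(\<Sum>S\<in>Pow P. (f (card S)::real)) = (\<Sum>j\<le>card P. real (card P choose j) * f j)"
proof -
  have "(\<Sum>S\<in>Pow P. f (card S)) = (\<Sum>j\<le>card P. \<Sum>S\<in>{S\<in>Pow P. card S = j}. f (card S))"
    by (rule sum.group[symmetric]) (use assms in \<open>auto intro: card_mono\<close>)
  also have "\<dots> = (\<Sum>j\<le>card P. real (card P choose j) * f j)"
  proof (rule sum.cong[OF refl])
    fix j
    have "(\<Sum>S\<in>{S\<in>Pow P. card S = j}. f (card S)) = (\<Sum>S\<in>{S\<in>Pow P. card S = j}. f j)"
      by (rule sum.cong) auto
    also have "\<dots> = real (card {S\<in>Pow P. card S = j}) * f j" by simp
    also have "{S\<in>Pow P. card S = j} = {S. S \<subseteq> P \<and> card S = j}" by auto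
    finally show "(\<Sum>S\<in>{S\<in>Pow P. card S = j}. f (card S)) = real (card P choose j) * f j"
      using n_subsets[OF assms, of j] by simp
  qed
  finally show ?thesis .
qed

lemma sum_VP:
  fixes P :: "'n::finite set"
  shows "(\<Sum>v\<in>VP P. (f (hweight v)::real)) = (\<Sum>j\<le>card P. real (card P choose j) * f j)"
proof -
  have "(\<Sum>v\<in>VP P. f (hweight v)) = (\<Sum>S\<in>Pow P. f (card S))"
  proof (rule sum.reindex_bij_witness[of _ ind supp])
    fix v assume "v \<in> VP P" then show "ind (supp v) = v"
      by (auto simp: VP_def ind_def supp_def vec_eq_iff)
  next
    fix v assume "v \<in> VP P" then show "supp v \<in> Pow P"
      by (auto simp: VP_def supp_def)
  next
    fix S assume "S \<in> Pow P" then show "supp (ind S) = S" "ind S \<in> VP P"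
      by (simp, auto simp: VP_def ind_def)
  next
    fix v assume "v \<in> VP P" then show "f (card (supp v)) = f (hweight v)"
      by (simp add: hweight_def)
  qed
  also have "\<dots> = (\<Sum>j\<le>card P. real (card P choose j) * f j)"
    by (rule sum_Pow_card) simp
  finally show ?thesis .
qed

lemma VP_UNIV[simp]: "VP UNIV = UNIV" by (simp add: VP_def)

lemma S0: "(\<Sum>y\<in>(UNIV::(bit^'n::finite) set). (lam::real) ^ hweight y) = (1 + lam) ^ CARD('n)"
proof -
  have "(\<Sum>y\<in>(UNIV::(bit^'n::finite) set). lam ^ hweight y) = (\<Sum>j\<le>CARD('n). real (CARD('n) choose j) * lam ^ j)"
    using sum_VP[of "\<lambda>j. lam ^ j" "UNIV::'n set"] by simp
  also have "\<dots> = (lam + 1) ^ CARD('n)"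
    by (simp add: binomial_ring)
  finally show ?thesis by (simp add: add.commute)
qed

lemma sum_VP_pow:
  fixes P :: "'n::finite set"
  shows "(\<Sum>v\<in>VP P. (lam::real) ^ hweight v) = (1 + lam) ^ card P"
proof -
  have "(\<Sum>v\<in>VP P. lam ^ hweight v) = (\<Sum>j\<le>card P. real (card P choose j) * lam ^ j)"
    by (rule sum_VP)
  also have "\<dots> = (lam + 1) ^ card P"
    by (simp add: binomial_ring)
  finally show ?thesis by (simp add: add.commute)
qed

definition cov :: "(bit^'n) set \<Rightarrow> 'n set" where
  "cov C = (\<Union>c\<in>C. supp c)"

lemma span_empty': "F2span {} = {0}"
  unfolding F2span_def by simp

lemma cov_insert: "cov (F2span (insert g F)) = cov (F2span F) \<union> supp g"
proof (intro equalityI subsetI)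
  fix i assume "i \<in> cov (F2span (insert g F))"
  then obtain c where c: "c \<in> F2span (insert g F)" "i \<in> supp c" unfolding cov_def by blast
  then consider "c \<in> F2span F" | c' where "c' \<in> F2span F" "c = g + c'"
    using span_insert_eq by blast
  then show "i \<in> cov (F2span F) \<union> supp g"
  proof cases
    case 1 then show ?thesis using c unfolding cov_def by blast
  next
    case 2 then show ?thesis using c supp_add[of g c'] unfolding cov_def by blast
  qed
next
  fix i assume "i \<in> cov (F2span F) \<union> supp g"
  moreover have "g \<in> F2span (insert g F)" by (rule span_base') simp
  moreover have "F2span F \<subseteq> F2span (insert g F)" using span_insert_eq by blast
  ultimately show "i \<in> cov (F2span (insert g F))" unfolding cov_def by blast
qed

lemma span_red: "g \<in> F2span F \<Longrightarrow> F2span (insert g F) = F2span F"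
  unfolding F2span_def by (rule vec.span_redundant)

lemma span_disj: "g \<notin> F2span F \<Longrightarrow> F2span F \<inter> (\<lambda>c. g + c) ` F2span F = {}"
proof -
  assume g: "g \<notin> F2span F"
  { fix c assume c: "c \<in> F2span F" "g + c \<in> F2span F"
    have "(g + c) + c \<in> F2span F" by (rule span_add'[OF c(2) c(1)])
    moreover have "(g + c) + c = g" by (simp add: add.assoc)
    ultimately have False using g by metis }
  then show ?thesis by blast
qed

lemma card_span_insert: "g \<notin> F2span F \<Longrightarrow> card (F2span (insert g F)) = 2 * card (F2span F)"
proof -
  assume g: "g \<notin> F2span F"
  have "card (F2span (insert g F)) = card (F2span F) + card ((\<lambda>c. g + c) ` F2span F)"
    unfolding span_insert_eq by (rule card_Un_disjoint) (use span_disj[OF g] in auto)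
  also have "card ((\<lambda>c. g + c) ` F2span F) = card (F2span F)" by (rule card_coset)
  finally show ?thesis by simp
qed

lemma W_bound:
  fixes G :: "(bit^'n::finite) set"
  assumes "finite G" and "\<forall>g\<in>G. hweight g \<le> w" and w: "w \<ge> 1"
    and l0: "0 \<le> lam" and l1: "lam \<le> (1::real)"
  shows "(1 + lam ^ w) powr (real (card (cov (F2span G))) / real w) \<le> (\<Sum>c\<in>F2span G. lam ^ hweight c)"
  using assms(1,2)
proof (induction G rule: finite_induct)
  case empty
  then show ?case by (simp add: span_empty' cov_def)
next
  case (insert g F)
  have bpos: "0 < 1 + lam ^ w" using l0 by (simp add: add_pos_nonneg)
  have b1: "1 \<le> 1 + lam ^ w" using l0 by simp
  have IH: "(1 + lam ^ w) powr (real (card (cov (F2span F))) / real w) \<le> (\<Sum>c\<in>F2span F. lam ^ hweight c)"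
    using insert by simp
  show ?case
  proof (cases "g \<in> F2span F")
    case True
    then show ?thesis using IH by (simp add: span_red)
  next
    case False
    let ?D = "F2span F"
    let ?W = "\<Sum>c\<in>?D. lam ^ hweight c"
    have sumD: "(\<Sum>c\<in>F2span (insert g F). lam ^ hweight c) = ?W + (\<Sum>c\<in>?D. lam ^ hweight (g + c))"
    proof -
      have "(\<Sum>c\<in>F2span (insert g F). lam ^ hweight c) = ?W + (\<Sum>c\<in>(\<lambda>c. g + c) ` ?D. lam ^ hweight c)"
        unfolding span_insert_eq by (rule sum.union_disjoint) (use span_disj[OF False] in auto)
      also have "(\<Sum>c\<in>(\<lambda>c. g + c) ` ?D. lam ^ hweight c) = (\<Sum>c\<in>?D. lam ^ hweight (g + c))"
        by (rule sum.reindex_cong[of "\<lambda>c. g + c"]) (auto simp: inj_on_def)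
      finally show ?thesis .
    qed
    have "(\<Sum>c\<in>?D. lam ^ w * lam ^ hweight c) \<le> (\<Sum>c\<in>?D. lam ^ hweight (g + c))"
    proof (rule sum_mono)
      fix c
      have "hweight (g + c) \<le> w + hweight c" using hweight_add[of g c] insert.prems by simp
      then show "lam ^ w * lam ^ hweight c \<le> lam ^ hweight (g + c)"
        using pow_anti[OF l0 l1] by (simp add: power_add[symmetric])
    qed
    moreover have "?W * (1 + lam ^ w) = ?W + (\<Sum>c\<in>?D. lam ^ w * lam ^ hweight c)"
      by (simp add: distrib_left sum_distrib_left sum.distrib mult.commute)
    ultimately have "?W * (1 + lam ^ w) \<le> (\<Sum>c\<in>F2span (insert g F). lam ^ hweight c)"
      unfolding sumD by linarith
    note WW = this
    have cardle: "card (cov (F2span (insert g F))) \<le> card (cov (F2span F)) + w"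
    proof -
      have "card (cov (F2span (insert g F))) \<le> card (cov (F2span F)) + card (supp g)"
        unfolding cov_insert by (rule card_Un_le)
      then show ?thesis using insert.prems by (simp add: hweight_def)
    qed
    have "(1 + lam ^ w) powr (real (card (cov (F2span (insert g F)))) / real w)
        \<le> (1 + lam ^ w) powr ((real (card (cov (F2span F))) + real w) / real w)"
      using cardle w b1 by (intro powr_mono divide_right_mono) auto
    also have "\<dots> = (1 + lam ^ w) powr (real (card (cov (F2span F))) / real w) * (1 + lam ^ w)"
      using w bpos by (simp add: add_divide_distrib powr_add)
    also have "\<dots> \<le> ?W * (1 + lam ^ w)"
      using IH bpos by (intro mult_right_mono) auto
    finally show ?thesis using WW by linarith
  qed
qed



lemma finite_all[simp]: "finite (G::(bit^'n::finite) set)"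
  by (rule finite_subset[of _ UNIV]) auto

lemma general_bound:
  fixes C :: "(bit^'n::finite) set"
  assumes w: "w \<ge> 1" and CG: "C = F2span G" and Gw: "\<forall>g\<in>G. hweight g \<le> w"
    and cv: "(\<Union>c\<in>C. supp c) = UNIV" and l0: "0 \<le> lam" and l1: "lam \<le> (1::real)"
  shows "Q C lam \<le> ((1 + lam) ^ w / (1 + lam ^ w)) powr (real CARD('n) / real w)"
proof -
  have g: "grp C" using CG grp_span by simp
  have covC: "card (cov C) = CARD('n)" using cv by (simp add: cov_def)
  have Wb: "(1 + lam ^ w) powr (real CARD('n) / real w) \<le> (\<Sum>c\<in>C. lam ^ hweight c)"
    using W_bound[of G w lam] w Gw l0 l1 CG covC by simp
  have bpos: "0 < 1 + lam ^ w" using l0 by (simp add: add_pos_nonneg)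
  let ?K = "(1 + lam ^ w) powr (real CARD('n) / real w)"
  have Kpos: "0 < ?K" using bpos by simp
  have cpos: "0 < real (card C)" using g unfolding grp_def by (auto simp: card_gt_0_iff)
  have Qnn: "0 \<le> Q C lam" unfolding Q_def using l0 by (auto intro: sum_nonneg)
  have "real (card C) * Q C lam * (\<Sum>c\<in>C. lam ^ hweight c) \<le> real (card C) * (1 + lam) ^ CARD('n)"
    using QW[OF g l0 l1] Q_sum[OF g, of lam] S0[of lam, where 'n='n] by simp
  then have "Q C lam * (\<Sum>c\<in>C. lam ^ hweight c) \<le> (1 + lam) ^ CARD('n)"
    using cpos by (simp add: mult.assoc)
  moreover have "Q C lam * ?K \<le> Q C lam * (\<Sum>c\<in>C. lam ^ hweight c)"
    using Wb Qnn by (rule mult_left_mono)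
  ultimately have "Q C lam * ?K \<le> (1 + lam) ^ CARD('n)" by linarith
  then have "Q C lam \<le> (1 + lam) ^ CARD('n) / ?K"
    using Kpos by (simp add: pos_le_divide_eq)
  also have "\<dots> = ((1 + lam) ^ w / (1 + lam ^ w)) powr (real CARD('n) / real w)"
  proof -
    have lp: "0 < 1 + lam" using l0 by simp
    have "((1 + lam) ^ w) powr (real CARD('n) / real w) = (1 + lam) powr (real w * (real CARD('n) / real w))"
      using lp by (simp add: powr_realpow[symmetric] powr_powr)
    also have "\<dots> = (1 + lam) ^ CARD('n)"
      using w lp by (simp add: powr_realpow)
    finally show ?thesis using lp bpos by (simp add: powr_divide)
  qed
  finally show ?thesis .
qed

lemma root_le:
  fixes beta B x y :: real
  assumes "0 \<le> beta" "beta ^ w = B" "0 \<le> x" "0 \<le> y" "x ^ w \<le> B ^ m * y ^ w" "0 < w"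
  shows "x \<le> beta ^ m * y"
proof -
  have "(beta ^ m * y) ^ w = B ^ m * y ^ w"
    using assms(2) by (simp add: power_mult_distrib power_mult[symmetric] mult.commute[of m] power_mult)
  then have "x ^ w \<le> (beta ^ m * y) ^ w" using assms(5) by simp
  moreover obtain k where "w = Suc k" using assms(6) by (cases w) auto
  ultimately show ?thesis using assms(1,4)
    by (metis power_le_imp_le_base zero_le_power mult_nonneg_nonneg)
qed



definition U0 :: "'n set \<Rightarrow> (bit^'n) set" where
  "U0 P = {u. \<forall>i\<in>P. u $ i = 0}"

lemma om_insert:
  fixes F :: "(bit^'n::finite) set"
  shows "omega (F2span (insert g F)) y = min (omega (F2span F) y) (omega (F2span F) (y + g))"
proof -
  let ?D = "F2span (insert g F)" and ?D' = "F2span F"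
  have gD: "grp ?D" "grp ?D'" by (simp_all add: grp_span)
  have sub: "?D' \<subseteq> ?D" and sub2: "\<And>c. c \<in> ?D' \<Longrightarrow> g + c \<in> ?D"
    using span_insert_eq[of g F] by auto
  obtain c0 where c0: "c0 \<in> ?D'" "omega ?D' y = hweight (y + c0)" using om_ex gD(2) grp_def by blast
  obtain c1 where c1: "c1 \<in> ?D'" "omega ?D' (y + g) = hweight (y + g + c1)" using om_ex gD(2) grp_def by blast
  have le1: "omega ?D y \<le> omega ?D' y" using om_le[of c0 ?D y] c0 sub by auto
  have le2: "omega ?D y \<le> omega ?D' (y + g)" using om_le[of "g + c1" ?D y] c1 sub2
    by (simp add: add.assoc)
  obtain c where c: "c \<in> ?D" "omega ?D y = hweight (y + c)" using om_ex gD(1) grp_def by blast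
  have "c \<in> ?D' \<or> c \<in> (\<lambda>c. g + c) ` ?D'" using c(1) span_insert_eq[of g F] by blast
  then have "omega ?D y \<ge> min (omega ?D' y) (omega ?D' (y + g))"
  proof
    assume "c \<in> ?D'" then show ?thesis using om_le[of c ?D' y] c(2) by simp
  next
    assume "c \<in> (\<lambda>c. g + c) ` ?D'"
    then obtain c' where "c' \<in> ?D'" "c = g + c'" by blast
    then show ?thesis using om_le[of c' ?D' "y + g"] c(2) by (simp add: add.assoc)
  qed
  then show ?thesis using le1 le2 by simp
qed

lemma om_split:
  fixes D :: "(bit^'n::finite) set"
  assumes g: "grp D" and DU: "D \<subseteq> U0 P" and u: "u \<in> U0 P" and v: "v \<in> VP P"
  shows "omega D (u + v) = omega D u + hweight v"
proof -
  have disj: "supp (u + c) \<inter> supp v = {}" if "c \<in> D" for c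
  proof -
    { fix i assume "i \<in> supp v"
      then have "i \<in> P" using v by (auto simp: supp_def VP_def)
      moreover have "c \<in> U0 P" using DU that by auto
      ultimately have "(u + c) $ i = 0" using u by (simp add: U0_def) }
    then show ?thesis by (auto simp: supp_def)
  qed
  obtain c0 where c0: "c0 \<in> D" "omega D u = hweight (u + c0)" using om_ex g grp_def by blast
  obtain c1 where c1: "c1 \<in> D" "omega D (u + v) = hweight (u + v + c1)" using om_ex g grp_def by blast
  have "omega D (u + v) \<le> hweight (u + v + c0)" by (rule om_le[OF c0(1)])
  also have "u + v + c0 = (u + c0) + v" by (simp add: algebra_simps)
  also have "hweight \<dots> = hweight (u + c0) + hweight v" by (rule hweight_add_disj[OF disj[OF c0(1)]])
  finally have a: "omega D (u + v) \<le> omega D u + hweight v" using c0 by simp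
  have e: "u + v + c1 = (u + c1) + v" by (simp add: algebra_simps)
  have "omega D (u + v) = hweight (u + c1) + hweight v"
    by (simp only: c1(2) e hweight_add_disj[OF disj[OF c1(1)]])
  moreover have "omega D u \<le> hweight (u + c1)" by (rule om_le[OF c1(1)])
  ultimately show ?thesis using a by simp
qed

definition offP :: "'n set \<Rightarrow> bit^'n \<Rightarrow> bit^'n" where
  "offP P y = (\<chi> i. if i \<in> P then 0 else y $ i)"
definition onP :: "'n set \<Rightarrow> bit^'n \<Rightarrow> bit^'n" where
  "onP P y = (\<chi> i. if i \<in> P then y $ i else 0)"

lemma sum_decomp:
  fixes P :: "'n::finite set"
  shows "(\<Sum>y\<in>UNIV. (f y::real)) = (\<Sum>u\<in>U0 P. \<Sum>v\<in>VP P. f (u + v))"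
proof -
  have "(\<Sum>u\<in>U0 P. \<Sum>v\<in>VP P. f (u + v)) = (\<Sum>(u,v)\<in>U0 P \<times> VP P. f (u + v))"
    by (rule sum.cartesian_product)
  also have "\<dots> = (\<Sum>y\<in>UNIV. f y)"
  proof (rule sum.reindex_bij_witness[of _ "\<lambda>y. (offP P y, onP P y)" "\<lambda>(u,v). u + v"])
    fix a :: "(bit^'n) \<times> (bit^'n)" assume "a \<in> U0 P \<times> VP P"
    then show "(offP P (case a of (u, v) \<Rightarrow> u + v), onP P (case a of (u, v) \<Rightarrow> u + v)) = a"
      by (cases a) (auto simp: offP_def onP_def U0_def VP_def vec_eq_iff)
  next
    fix a :: "(bit^'n) \<times> (bit^'n)" assume "a \<in> U0 P \<times> VP P"
    then show "(case a of (u, v) \<Rightarrow> u + v) \<in> UNIV" by simp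
  next
    fix b :: "bit^'n" assume "b \<in> UNIV"
    show "(case (offP P b, onP P b) of (u, v) \<Rightarrow> u + v) = b"
      by (auto simp: offP_def onP_def vec_eq_iff)
    show "(offP P b, onP P b) \<in> U0 P \<times> VP P"
      by (auto simp: offP_def onP_def U0_def VP_def)
  next
    fix a :: "(bit^'n) \<times> (bit^'n)" assume "a \<in> U0 P \<times> VP P"
    show "f (case a of (u, v) \<Rightarrow> u + v) = (case a of (u, v) \<Rightarrow> f (u + v))"
      by (cases a) simp
  qed
  finally show ?thesis by simp
qed

lemma U0_add: "u \<in> U0 P \<Longrightarrow> h \<in> U0 P \<Longrightarrow> u + h \<in> U0 P"
  by (auto simp: U0_def)

lemma sum_U0_shift:
  assumes "h \<in> U0 P"
  shows "(\<Sum>u\<in>U0 P. (f (u + h)::real)) = (\<Sum>u\<in>U0 P. f u)"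
  by (rule sum.reindex_bij_witness[of _ "\<lambda>u. u + h" "\<lambda>u. u + h"])
     (use assms in \<open>auto simp: add.assoc U0_add\<close>)



definition Key :: "real \<Rightarrow> nat \<Rightarrow> real \<Rightarrow> bool" where
  "Key beta w lam \<longleftrightarrow> (\<forall>m a b. m \<le> w \<longrightarrow> a \<le> b + (w - m) \<longrightarrow> b \<le> a + (w - m) \<longrightarrow>
     (\<Sum>j\<le>m. real (m choose j) * lam ^ min (a + j) (b + (m - j))) \<le> beta ^ m * (lam ^ a + lam ^ b))"

lemma Q_step:
  fixes F :: "(bit^'n::finite) set"
  assumes K: "Key beta w lam" and gw: "hweight g \<le> w" and gn: "g \<notin> F2span F"
  defines "P \<equiv> supp g - cov (F2span F)"
  shows "(\<Sum>y\<in>UNIV. lam ^ omega (F2span (insert g F)) y)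
           \<le> 2 * beta ^ card P * (\<Sum>u\<in>U0 P. lam ^ omega (F2span F) u)"
    and "(\<Sum>y\<in>UNIV. lam ^ omega (F2span F) y) = (\<Sum>u\<in>U0 P. lam ^ omega (F2span F) u) * (1 + lam) ^ card P"
proof -
  let ?D' = "F2span F"
  let ?om = "omega ?D'"
  let ?m = "card P"
  define h where "h = g + ind P"
  have gD': "grp ?D'" by (rule grp_span)
  have DU: "?D' \<subseteq> U0 P"
  proof
    fix c assume c: "c \<in> ?D'"
    { fix i assume "i \<in> P"
      then have "i \<notin> supp c" using c unfolding P_def cov_def by blast
      then have "c $ i = 0" by (simp add: supp_def) }
    then show "c \<in> U0 P" by (simp add: U0_def)
  qed
  have PS: "P \<subseteq> supp g" unfolding P_def by blast
  have hU: "h \<in> U0 P" using PS by (auto simp: U0_def h_def ind_def supp_def)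
  have gh: "g = h + ind P" unfolding h_def by (simp add: add.assoc)
  have indV: "ind P \<in> VP P" by (simp add: VP_def ind_def)
  have hw: "hweight g = hweight h + ?m"
  proof -
    have "supp h \<inter> supp (ind P) = {}" using hU by (auto simp: U0_def supp_def ind_def split: if_splits)
    then have "hweight (h + ind P) = hweight h + hweight (ind P)" by (rule hweight_add_disj)
    then show ?thesis unfolding gh by (simp add: hweight_def)
  qed
  have vflip: "v + ind P \<in> VP P \<and> hweight (v + ind P) = ?m - hweight v" if v: "v \<in> VP P" for v
  proof
    show "v + ind P \<in> VP P" using v by (auto simp: VP_def ind_def)
    have ss: "supp v \<subseteq> P" using v by (auto simp: VP_def supp_def)
    have "supp (v + ind P) = P - supp v" using v by (auto simp: VP_def ind_def supp_def)
    then show "hweight (v + ind P) = ?m - hweight v"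
      using ss by (simp add: hweight_def card_Diff_subset)
  qed
  have omsplit: "?om (u + v) = ?om u + hweight v" if "u \<in> U0 P" "v \<in> VP P" for u v
    by (rule om_split[OF gD' DU that])
  have "(\<Sum>y\<in>UNIV. lam ^ omega (F2span (insert g F)) y)
      = (\<Sum>u\<in>U0 P. \<Sum>v\<in>VP P. lam ^ omega (F2span (insert g F)) (u + v))"
    by (rule sum_decomp)
  also have "\<dots> = (\<Sum>u\<in>U0 P. \<Sum>v\<in>VP P. lam ^ min (?om u + hweight v) (?om (u + h) + (?m - hweight v)))"
  proof (intro sum.cong refl)
    fix u v assume u: "u \<in> U0 P" and v: "v \<in> VP P"
    have e: "u + v + g = (u + h) + (v + ind P)" by (simp add: gh algebra_simps)
    have "?om (u + v + g) = ?om (u + h) + (?m - hweight v)"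
      unfolding e using omsplit[OF U0_add[OF u hU] conjunct1[OF vflip[OF v]]] conjunct2[OF vflip[OF v]] by simp
    then show "lam ^ omega (F2span (insert g F)) (u + v)
        = lam ^ min (?om u + hweight v) (?om (u + h) + (?m - hweight v))"
      using om_insert[of g F "u + v"] omsplit[OF u v] by simp
  qed
  also have "\<dots> \<le> (\<Sum>u\<in>U0 P. beta ^ ?m * (lam ^ ?om u + lam ^ ?om (u + h)))"
  proof (rule sum_mono)
    fix u assume u: "u \<in> U0 P"
    let ?a = "?om u" and ?b = "?om (u + h)"
    have "(\<Sum>v\<in>VP P. lam ^ min (?a + hweight v) (?b + (?m - hweight v)))
        = (\<Sum>j\<le>?m. real (?m choose j) * lam ^ min (?a + j) (?b + (?m - j)))"
      by (rule sum_VP)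
    also have "\<dots> \<le> beta ^ ?m * (lam ^ ?a + lam ^ ?b)"
    proof -
      have m: "?m \<le> w" using hw gw by simp
      have "?b \<le> ?a + hweight h" using om_add_le[OF gD'] by simp
      moreover have "?a \<le> ?b + hweight h"
        using om_add_le[OF gD', of "u + h" h] by (simp add: add.assoc)
      moreover have "hweight h \<le> w - ?m" using hw gw by simp
      ultimately show ?thesis using K m unfolding Key_def by (meson add_left_mono order_trans)
    qed
    finally show "(\<Sum>v\<in>VP P. lam ^ min (?a + hweight v) (?b + (?m - hweight v))) \<le> beta ^ ?m * (lam ^ ?a + lam ^ ?b)" .
  qed
  also have "\<dots> = beta ^ ?m * ((\<Sum>u\<in>U0 P. lam ^ ?om u) + (\<Sum>u\<in>U0 P. lam ^ ?om (u + h)))"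
    by (simp add: distrib_left sum_distrib_left sum.distrib)
  also have "(\<Sum>u\<in>U0 P. lam ^ ?om (u + h)) = (\<Sum>u\<in>U0 P. lam ^ ?om u)"
    by (rule sum_U0_shift[OF hU])
  finally show "(\<Sum>y\<in>UNIV. lam ^ omega (F2span (insert g F)) y)
           \<le> 2 * beta ^ card P * (\<Sum>u\<in>U0 P. lam ^ omega (F2span F) u)" by simp
  have "(\<Sum>y\<in>UNIV. lam ^ ?om y) = (\<Sum>u\<in>U0 P. \<Sum>v\<in>VP P. lam ^ ?om (u + v))"
    by (rule sum_decomp)
  also have "\<dots> = (\<Sum>u\<in>U0 P. lam ^ ?om u * (\<Sum>v\<in>VP P. lam ^ hweight v))"
    by (intro sum.cong refl) (simp add: omsplit power_add sum_distrib_left)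
  also have "\<dots> = (\<Sum>u\<in>U0 P. lam ^ ?om u) * (1 + lam) ^ ?m"
    by (simp add: sum_VP_pow sum_distrib_right)
  finally show "(\<Sum>y\<in>UNIV. lam ^ omega (F2span F) y) = (\<Sum>u\<in>U0 P. lam ^ omega (F2span F) u) * (1 + lam) ^ card P" .
qed



lemma Q_ind:
  fixes G :: "(bit^'n::finite) set"
  assumes K: "Key beta w lam" and l0: "0 \<le> lam" and b0: "0 \<le> beta"
    and fin: "finite G" and Gw: "\<forall>g\<in>G. hweight g \<le> w"
  shows "(\<Sum>y\<in>UNIV. lam ^ omega (F2span G) y)
     \<le> real (card (F2span G)) * beta ^ card (cov (F2span G)) * (1 + lam) ^ (CARD('n) - card (cov (F2span G)))"
  using fin Gw
proof (induction G rule: finite_induct)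
  case empty
  have "omega {0::bit^'n} y = hweight y" for y
    by (simp add: omega_def coset_weight_def)
  then show ?case by (simp add: span_empty' cov_def S0)
next
  case (insert g F)
  have IH: "(\<Sum>y\<in>UNIV. lam ^ omega (F2span F) y)
     \<le> real (card (F2span F)) * beta ^ card (cov (F2span F)) * (1 + lam) ^ (CARD('n) - card (cov (F2span F)))"
    using insert by simp
  show ?case
  proof (cases "g \<in> F2span F")
    case True
    then show ?thesis using IH by (simp add: span_red)
  next
    case False
    define P where "P = supp g - cov (F2span F)"
    let ?X = "\<Sum>u\<in>U0 P. lam ^ omega (F2span F) u"
    have gw: "hweight g \<le> w" using insert.prems by simp
    have A: "(\<Sum>y\<in>UNIV. lam ^ omega (F2span (insert g F)) y) \<le> 2 * beta ^ card P * ?X"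
      using Q_step(1)[OF K gw False] unfolding P_def by simp
    have S': "(\<Sum>y\<in>UNIV. lam ^ omega (F2span F) y) = ?X * (1 + lam) ^ card P"
      using Q_step(2)[OF K gw False] unfolding P_def by simp
    let ?c' = "card (cov (F2span F))" and ?c = "card (cov (F2span (insert g F)))"
    have covD: "cov (F2span (insert g F)) = cov (F2span F) \<union> P"
      unfolding cov_insert P_def by blast
    have cc: "?c = ?c' + card P"
      unfolding covD by (rule card_Un_disjoint) (auto simp: P_def)
    have cn: "?c \<le> CARD('n)" by (rule card_mono) auto
    have nc: "CARD('n) - ?c' = (CARD('n) - ?c) + card P" using cc cn by simp
    have lp: "0 < (1 + lam) ^ card P" using l0 by simp
    have "?X * (1 + lam) ^ card P
        \<le> (real (card (F2span F)) * beta ^ ?c' * (1 + lam) ^ (CARD('n) - ?c)) * (1 + lam) ^ card P"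
      using IH S' nc by (simp add: power_add mult.assoc)
    then have X: "?X \<le> real (card (F2span F)) * beta ^ ?c' * (1 + lam) ^ (CARD('n) - ?c)"
      using lp by simp
    have "2 * beta ^ card P * ?X \<le> 2 * beta ^ card P * (real (card (F2span F)) * beta ^ ?c' * (1 + lam) ^ (CARD('n) - ?c))"
      using X b0 by (intro mult_left_mono) auto
    also have "\<dots> = real (card (F2span (insert g F))) * beta ^ ?c * (1 + lam) ^ (CARD('n) - ?c)"
      using card_span_insert[OF False] cc by (simp add: power_add)
    finally show ?thesis using A by linarith
  qed
qed



lemma sum_reflect:
  "(\<Sum>j\<le>m. real (m choose j) * lam ^ min (a + j) (b + (m - j)))
 = (\<Sum>j\<le>m. real (m choose j) * lam ^ min (b + j) (a + (m - j)))"
  by (rule sum.reindex_bij_witness[of _ "\<lambda>j. m - j" "\<lambda>j. m - j"])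
     (auto simp: binomial_symmetric[symmetric] min.commute)

lemma key_half:
  assumes D: "\<And>m d. m + d \<le> w \<Longrightarrow> (\<Sum>j\<le>m. real (m choose j) * lam ^ min j (d + (m - j))) \<le> beta ^ m * (1 + lam ^ d)"
    and l0: "0 \<le> (lam::real)" and ab: "a \<le> b" and mw: "m + (b - a) \<le> w"
  shows "(\<Sum>j\<le>m. real (m choose j) * lam ^ min (a + j) (b + (m - j))) \<le> beta ^ m * (lam ^ a + lam ^ b)"
proof -
  let ?d = "b - a"
  have "(\<Sum>j\<le>m. real (m choose j) * lam ^ min (a + j) (b + (m - j)))
      = (\<Sum>j\<le>m. lam ^ a * (real (m choose j) * lam ^ min j (?d + (m - j))))"
  proof (rule sum.cong[OF refl])
    fix j assume "j \<in> {..m}"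
    have "min (a + j) (b + (m - j)) = a + min j (?d + (m - j))" using ab by simp
    then show "real (m choose j) * lam ^ min (a + j) (b + (m - j)) = lam ^ a * (real (m choose j) * lam ^ min j (?d + (m - j)))"
      by (simp add: power_add)
  qed
  also have "\<dots> = lam ^ a * (\<Sum>j\<le>m. real (m choose j) * lam ^ min j (?d + (m - j)))"
    by (simp add: sum_distrib_left)
  also have "\<dots> \<le> lam ^ a * (beta ^ m * (1 + lam ^ ?d))"
    using D[OF mw] l0 by (intro mult_left_mono) auto
  also have "\<dots> = beta ^ m * (lam ^ a + lam ^ b)"
  proof -
    have "lam ^ a * lam ^ ?d = lam ^ b" using ab by (simp add: power_add[symmetric])
    then show ?thesis by (simp add: algebra_simps)
  qed
  finally show ?thesis .
qed

lemma key_from_D: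
  assumes D: "\<And>m d. m + d \<le> w \<Longrightarrow> (\<Sum>j\<le>m. real (m choose j) * lam ^ min j (d + (m - j))) \<le> beta ^ m * (1 + lam ^ d)"
    and l0: "0 \<le> (lam::real)"
  shows "Key beta w lam"
  unfolding Key_def
proof (intro allI impI)
  fix m a b assume m: "m \<le> w" and h1: "a \<le> b + (w - m)" and h2: "b \<le> a + (w - m)"
  show "(\<Sum>j\<le>m. real (m choose j) * lam ^ min (a + j) (b + (m - j))) \<le> beta ^ m * (lam ^ a + lam ^ b)"
  proof (cases "a \<le> b")
    case True
    moreover have "m + (b - a) \<le> w" using h2 m by simp
    ultimately show ?thesis using key_half[OF D l0] by blast
  next
    case False
    then have "b \<le> a" by simp
    moreover have "m + (a - b) \<le> w" using h1 m by simp
    ultimately have "(\<Sum>j\<le>m. real (m choose j) * lam ^ min (b + j) (a + (m - j))) \<le> beta ^ m * (lam ^ b + lam ^ a)"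
      using key_half[OF D l0] by blast
    moreover have "(\<Sum>j\<le>m. real (m choose j) * lam ^ min (a + j) (b + (m - j)))
      = (\<Sum>j\<le>m. real (m choose j) * lam ^ min (b + j) (a + (m - j)))" by (rule sum_reflect)
    moreover have "beta ^ m * (lam ^ b + lam ^ a) = beta ^ m * (lam ^ a + lam ^ b)" by (simp add: add.commute)
    ultimately show ?thesis by linarith
  qed
qed

lemma root_beta:
  assumes "1 \<le> (B::real)" "0 < w"
  shows "((B powr (1 / real w)) ^ w = B)" "1 \<le> B powr (1 / real w)"
proof -
  show "(B powr (1 / real w)) ^ w = B" using assms by (simp add: powr_power)
  show "1 \<le> B powr (1 / real w)" using assms by (intro ge_one_powr_ge_zero) auto
qed



lemma e1: "(1+3*l)*(1+l^2)^3 - (1+l)^3 = 8*l^3 + 3*l^4 + 9*l^5 + l^6 + 3*l^7" for l :: real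
  by algebra
lemma e1b: "(1+3*l)^2 - (1+l)^3 = 3*l + 6*l^2 - l^3" for l :: real
  by algebra
lemma e1c: "(1+l)^3 - (1+3*l) = 3*l^2 + l^3" for l :: real
  by algebra

lemma Key3:
  assumes l0: "0 \<le> (l::real)" and l1: "l \<le> 1"
  shows "Key ((1 + 3*l) powr (1/3)) 3 l"
proof -
  define beta where "beta = (1 + 3*l) powr (1/3)"
  have B1: "1 \<le> 1 + 3*l" using l0 by simp
  have b3: "beta ^ 3 = 1 + 3*l" and b1: "1 \<le> beta"
    using root_beta[OF B1, of 3] by (simp_all add: beta_def)
  have b0: "0 \<le> beta" using b1 by simp
  have b3': "beta * (beta * beta) = 1 + 3*l" using b3 by (simp add: power3_eq_cube)
  have l3: "l^3 \<le> l"
  proof -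
    have "l * l \<le> 1" using l0 l1 by (simp add: mult_le_one)
    then have "l * (l * l) \<le> l * 1" using l0 by (rule mult_left_mono)
    then show ?thesis by (simp add: power3_eq_cube)
  qed
  have bl: "beta \<le> 1 + l"
  proof (rule power_le_imp_le_base[of beta 2])
    have "0 \<le> 3*l^2 + l^3" using l0 by simp
    then have "1 + 3*l \<le> (1 + l) ^ 3" using e1c[of l] by linarith
    then show "beta ^ Suc 2 \<le> (1 + l) ^ Suc 2"
      using b3 by (simp add: numeral_3_eq_3[symmetric])
  qed (use l0 in simp)
  have G1: "1 + l \<le> beta ^ 2 * 1"
  proof (rule root_le[OF b0 b3])
    have h6: "0 \<le> 6*l^2" using l0 by simp
    have "(1 + l) ^ 3 \<le> (1 + 3 * l) ^ 2" using h6 l0 l3 e1b[of l] by linarith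
    then show "(1 + l) ^ 3 \<le> (1 + 3 * l) ^ 2 * 1 ^ 3" by simp
  qed (use l0 in auto)
  have G2: "1 + l \<le> beta ^ 1 * (1 + l^2)"
  proof (rule root_le[OF b0 b3])
    have "0 \<le> 8*l^3 + 3*l^4 + 9*l^5 + l^6 + 3*l^7" using l0 by simp
    then show "(1 + l) ^ 3 \<le> (1 + 3 * l) ^ 1 * (1 + l\<^sup>2) ^ 3" using e1[of l] by simp
  qed (use l0 in auto)
  have P6: "beta * beta * beta \<le> beta * beta * (1 + l)"
    by (rule mult_left_mono[OF bl]) simp
  have P6': "1 + 3*l \<le> beta * beta * (1 + l)" using P6 b3' by (simp add: mult.assoc)
  have F3: "1 + l \<le> beta * (1 + l)" using mult_right_mono[OF b1, of "1+l"] l0 by simp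
  have G1': "1 + l \<le> beta * beta" using G1 by (simp add: power2_eq_square)
  have G2': "1 + l \<le> beta * (1 + l * l)" using G2 by (simp add: power2_eq_square)
  have "\<And>m d. m + d \<le> 3 \<Longrightarrow> (\<Sum>j\<le>m. real (m choose j) * l ^ min j (d + (m - j))) \<le> beta ^ m * (1 + l ^ d)"
  proof -
    fix m d :: nat assume md: "m + d \<le> 3"
    then have "m = 0 \<or> (m=1 \<and> d=0) \<or> (m=1 \<and> d=1) \<or> (m=1 \<and> d=2) \<or> (m=2 \<and> d=0) \<or> (m=2 \<and> d=1) \<or> (m=3 \<and> d=0)"
      by arith
    then show "(\<Sum>j\<le>m. real (m choose j) * l ^ min j (d + (m - j))) \<le> beta ^ m * (1 + l ^ d)"
      apply (elim disjE conjE)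
      apply (simp_all add: eval_nat_numeral)
      apply (simp add: l0)
      using b1 F3 G1' G2' P6' b3' apply linarith+
      done
  qed
  then show ?thesis unfolding beta_def[symmetric] by (rule key_from_D[OF _ l0])
qed



lemma q1: "(1+4*l+6*l^2)*(1+l^2)^4 - (1+l)^4 = 4*l^2 + 12*l^3 + 29*l^4 + 24*l^5 + 40*l^6 + 16*l^7 + 25*l^8 + 4*l^9 + 6*l^10" for l :: real
  by algebra
lemma q2: "(1+4*l+6*l^2)*(1+l^3)^4 - (1+l)^4 = 15*l^4 + 24*l^5 + 6*l^6 + 24*l^7 + 36*l^8 + 4*l^9 + 16*l^10 + 24*l^11 + l^12 + 4*l^13 + 6*l^14" for l :: real
  by algebra
lemma q3: "(1+4*l+6*l^2) - (1+l)^2 = 2*l + 5*l^2" for l :: real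
  by algebra
lemma q4: "(1+4*l+6*l^2)*(1+l)^2 - (1+3*l)^2 = 6*l^2 + 16*l^3 + 6*l^4" for l :: real
  by algebra
lemma q5: "(1+4*l+6*l^2)*(1+l^2)^2 - (1+l)^4 = 2*l^2 + 4*l^3 + 12*l^4 + 4*l^5 + 6*l^6" for l :: real
  by algebra
lemma q6: "(1+4*l+6*l^2)^3 - (1+3*l)^4 = 12*l^2 + 100*l^3 + 315*l^4 + 432*l^5 + 216*l^6" for l :: real
  by algebra

lemma sq_le: "0 \<le> (a::real) \<Longrightarrow> a \<le> b \<Longrightarrow> a^2 \<le> b^2"
  by (rule power_mono) auto

lemma Key4:
  assumes l0: "0 \<le> (l::real)" and l1: "l \<le> 1"
  shows "Key ((1 + 4*l + 6*l^2) powr (1/4)) 4 l"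
proof -
  define B where "B = 1 + 4*l + 6*l^2"
  define beta where "beta = B powr (1/4)"
  have B1: "1 \<le> B" using l0 by (simp add: B_def)
  have b4: "beta ^ 4 = B" and b1: "1 \<le> beta"
    using root_beta[OF B1, of 4] by (simp_all add: beta_def)
  have b0: "0 \<le> beta" using b1 by simp
  have nn: "0 \<le> B" using B1 by simp
  have H1: "1 + l \<le> beta ^ 2 * 1"
  proof (rule root_le[OF b0 b4])
    have "0 \<le> 2*l + 5*l^2" using l0 by simp
    then have "(1+l)^2 \<le> B" using q3[of l] unfolding B_def by linarith
    then have "((1+l)^2)^2 \<le> B^2" by (intro sq_le) auto
    moreover have "((1+l)^2)^2 = (1+l)^4" by algebra
    ultimately show "(1+l)^4 \<le> B^2 * 1^4" by simp
  qed (use l0 in auto)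
  have H2: "1 + l \<le> beta ^ 1 * (1 + l^2)"
  proof (rule root_le[OF b0 b4])
    have "0 \<le> 4*l^2 + 12*l^3 + 29*l^4 + 24*l^5 + 40*l^6 + 16*l^7 + 25*l^8 + 4*l^9 + 6*l^10"
      using l0 by simp
    then have "(1+l)^4 \<le> B * (1 + l^2)^4" using q1[of l] unfolding B_def by linarith
    then show "(1+l)^4 \<le> B^1 * (1 + l^2)^4" by simp
  qed (use l0 in auto)
  have H3: "1 + l \<le> beta ^ 1 * (1 + l^3)"
  proof (rule root_le[OF b0 b4])
    have "0 \<le> 15*l^4 + 24*l^5 + 6*l^6 + 24*l^7 + 36*l^8 + 4*l^9 + 16*l^10 + 24*l^11 + l^12 + 4*l^13 + 6*l^14"
      using l0 by simp
    then have "(1+l)^4 \<le> B * (1 + l^3)^4" using q2[of l] unfolding B_def by linarith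
    then show "(1+l)^4 \<le> B^1 * (1 + l^3)^4" by simp
  qed (use l0 in auto)
  have H4: "1 + 3*l \<le> beta ^ 2 * (1 + l)"
  proof (rule root_le[OF b0 b4])
    have "0 \<le> 6*l^2 + 16*l^3 + 6*l^4" using l0 by simp
    then have "(1+3*l)^2 \<le> B * (1+l)^2" using q4[of l] unfolding B_def by linarith
    then have "((1+3*l)^2)^2 \<le> (B * (1+l)^2)^2" by (intro sq_le) auto
    moreover have "((1+3*l)^2)^2 = (1+3*l)^4" by algebra
    moreover have "(B * (1+l)^2)^2 = B^2 * (1+l)^4" by algebra
    ultimately show "(1+3*l)^4 \<le> B^2 * (1+l)^4" by simp
  qed (use l0 in auto)
  have H5: "(1 + l)^2 \<le> beta ^ 2 * (1 + l^2)"
  proof (rule root_le[OF b0 b4])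
    have "0 \<le> 2*l^2 + 4*l^3 + 12*l^4 + 4*l^5 + 6*l^6" using l0 by simp
    then have "(1+l)^4 \<le> B * (1+l^2)^2" using q5[of l] unfolding B_def by linarith
    then have "((1+l)^4)^2 \<le> (B * (1+l^2)^2)^2" by (intro sq_le) auto
    moreover have "((1+l)^4)^2 = ((1+l)^2)^4" by algebra
    moreover have "(B * (1+l^2)^2)^2 = B^2 * (1+l^2)^4" by algebra
    ultimately show "((1+l)^2)^4 \<le> B^2 * (1+l^2)^4" by simp
  qed (use l0 in auto)
  have H6: "1 + 3*l \<le> beta ^ 3 * 1"
  proof (rule root_le[OF b0 b4])
    have "0 \<le> 12*l^2 + 100*l^3 + 315*l^4 + 432*l^5 + 216*l^6" using l0 by simp
    then have "(1+3*l)^4 \<le> B^3" using q6[of l] unfolding B_def by linarith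
    then show "(1+3*l)^4 \<le> B^3 * 1^4" by simp
  qed (use l0 in auto)
  have F3: "1 + l \<le> beta * (1 + l)" using mult_right_mono[OF b1, of "1+l"] l0 by simp
  have H1': "1 + l \<le> beta * beta" using H1 by (simp add: power2_eq_square)
  have H2': "1 + l \<le> beta * (1 + l * l)" using H2 by (simp add: power2_eq_square)
  have H3': "1 + l \<le> beta * (1 + l * (l * l))" using H3 by (simp add: power3_eq_cube mult.assoc)
  have H4': "1 + 3*l \<le> beta * beta * (1 + l)" using H4 by (simp add: power2_eq_square)
  have H5': "1 + 2*l + l * l \<le> beta * beta * (1 + l * l)" using H5 by (simp add: power2_eq_square algebra_simps)
  have H6': "1 + 3*l \<le> beta * (beta * beta)" using H6 by (simp add: power3_eq_cube)
  have H7': "(1 + 3*l) * (1 + l) \<le> beta * (beta * beta) * (1 + l)"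
    using mult_right_mono[OF H6', of "1+l"] l0 by simp
  have H7'': "4 * l + (1 + 3 * (l * l)) \<le> beta * (beta * beta) * (1 + l)"
    using H7' by (simp add: algebra_simps)
  have b4': "beta * (beta * (beta * beta)) = 1 + 4*l + 6*(l*l)" "beta * beta * (beta * beta) = 1 + 4*l + 6*(l*l)"
    using b4 unfolding B_def by (simp_all add: eval_nat_numeral power2_eq_square algebra_simps)
  have "\<And>m d. m + d \<le> 4 \<Longrightarrow> (\<Sum>j\<le>m. real (m choose j) * l ^ min j (d + (m - j))) \<le> beta ^ m * (1 + l ^ d)"
  proof -
    fix m d :: nat assume md: "m + d \<le> 4"
    then have "m = 0 \<or> (m=1 \<and> d=0) \<or> (m=1 \<and> d=1) \<or> (m=1 \<and> d=2) \<or> (m=1 \<and> d=3) \<or> (m=2 \<and> d=0) \<or> (m=2 \<and> d=1) \<or> (m=2 \<and> d=2) \<or> (m=3 \<and> d=0) \<or> (m=3 \<and> d=1) \<or> (m=4 \<and> d=0)"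
      by arith
    then show "(\<Sum>j\<le>m. real (m choose j) * l ^ min j (d + (m - j))) \<le> beta ^ m * (1 + l ^ d)"
      apply (elim disjE conjE)
      apply (simp_all add: eval_nat_numeral)
      apply (simp add: l0)
      using b1 F3 H1' H2' H3' H4' H5' H6' H7'' b4' mult_nonneg_nonneg[OF l0 l0] apply linarith+
      done
  qed
  then show ?thesis unfolding beta_def[symmetric] B_def[symmetric] by (rule key_from_D[OF _ l0])
qed



lemma from_key:
  fixes C :: "(bit^'n::finite) set"
  assumes K: "Key beta w lam" and l0: "0 \<le> lam" and b0: "0 \<le> beta"
    and CG: "C = F2span G" and Gw: "\<forall>g\<in>G. hweight g \<le> w"
    and cv: "(\<Union>c\<in>C. supp c) = UNIV"
  shows "Q C lam \<le> beta ^ CARD('n)"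
proof -
  have g: "grp C" using CG grp_span by simp
  have covC: "card (cov (F2span G)) = CARD('n)" using cv CG by (simp add: cov_def)
  have "real (card C) * Q C lam \<le> real (card C) * beta ^ CARD('n)"
    using Q_ind[OF K l0 b0 finite_all Gw] Q_sum[OF g, of lam] CG covC by simp
  moreover have "0 < real (card C)" using g unfolding grp_def by (auto simp: card_gt_0_iff)
  ultimately show ?thesis by simp
qed

lemma pow_powr: "0 < (B::real) \<Longrightarrow> (B powr (1 / real w)) ^ n = B powr (real n / real w)"
  by (simp add: powr_power)

theorem theorem3:
  fixes C :: "(bit ^ 'n::finite) set" and w :: nat
  assumes "w \<ge> 1"
    and "\<exists>G. C = F2span G \<and> (\<forall>g\<in>G. hweight g \<le> w)"
    and "(\<Union>c\<in>C. supp c) = UNIV"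
  shows "(\<forall>lam::real. 0 \<le> lam \<and> lam \<le> 1 \<longrightarrow>
           Q C lam \<le> ((1 + lam) ^ w / (1 + lam ^ w)) powr (real CARD('n) / real w))
      \<and> (w = 3 \<longrightarrow> (\<forall>lam::real. 0 \<le> lam \<and> lam \<le> 1 \<longrightarrow>
           Q C lam \<le> (1 + 3 * lam) powr (real CARD('n) / 3)))
      \<and> (w = 4 \<longrightarrow> (\<forall>lam::real. 0 \<le> lam \<and> lam \<le> 1 \<longrightarrow>
           Q C lam \<le> (1 + 4 * lam + 6 * lam^2) powr (real CARD('n) / 4)))"
proof -
  obtain G where CG: "C = F2span G" and Gw: "\<forall>g\<in>G. hweight g \<le> w" using assms(2) by blast
  note cv = assms(3)
  have P1: "\<forall>lam::real. 0 \<le> lam \<and> lam \<le> 1 \<longrightarrow>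
           Q C lam \<le> ((1 + lam) ^ w / (1 + lam ^ w)) powr (real CARD('n) / real w)"
    using general_bound[OF assms(1) CG Gw cv] by blast
  have P2: "w = 3 \<longrightarrow> (\<forall>lam::real. 0 \<le> lam \<and> lam \<le> 1 \<longrightarrow>
           Q C lam \<le> (1 + 3 * lam) powr (real CARD('n) / 3))"
  proof (intro impI allI)
    fix lam :: real assume w3: "w = 3" and l: "0 \<le> lam \<and> lam \<le> 1"
    have K: "Key ((1 + 3*lam) powr (1/3)) w lam" using Key3[of lam] l w3 by simp
    have "Q C lam \<le> ((1 + 3*lam) powr (1/3)) ^ CARD('n)"
      by (rule from_key[OF K _ _ CG Gw cv]) (use l in auto)
    also have "\<dots> = (1 + 3 * lam) powr (real CARD('n) / 3)"
      using pow_powr[of "1 + 3*lam" 3 "CARD('n)"] l by simp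
    finally show "Q C lam \<le> (1 + 3 * lam) powr (real CARD('n) / 3)" .
  qed
  have P3: "w = 4 \<longrightarrow> (\<forall>lam::real. 0 \<le> lam \<and> lam \<le> 1 \<longrightarrow>
           Q C lam \<le> (1 + 4 * lam + 6 * lam^2) powr (real CARD('n) / 4))"
  proof (intro impI allI)
    fix lam :: real assume w4: "w = 4" and l: "0 \<le> lam \<and> lam \<le> 1"
    have K: "Key ((1 + 4*lam + 6*lam^2) powr (1/4)) w lam" using Key4[of lam] l w4 by simp
    have Bp: "0 < 1 + 4*lam + 6*lam^2" using l by (simp add: add_pos_nonneg)
    have "Q C lam \<le> ((1 + 4*lam + 6*lam^2) powr (1/4)) ^ CARD('n)"
      by (rule from_key[OF K _ _ CG Gw cv]) (use l in auto)
    also have "\<dots> = (1 + 4*lam + 6*lam^2) powr (real CARD('n) / 4)"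
      using pow_powr[OF Bp, of 4 "CARD('n)"] by simp
    finally show "Q C lam \<le> (1 + 4 * lam + 6 * lam^2) powr (real CARD('n) / 4)" .
  qed
  show ?thesis using P1 P2 P3 by blast
qed

end
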